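(* Let $n$ and $k\ge2$ be integers with $20k<n$. Let $\mathbf{d}\in\mathbb{Z}_{\ge0}^n$ be a sequence with $\sum_{v\in[n]}d_v=nd\equiv0\pmod k$ (so $d$ is the average of $\mathbf{d}$), and let $\Delta(\mathbf{d})=\max_v d_v$. (i) If $\Delta(\mathbf{d})\le\left(1+\frac{1}{3k}\right)d\le\frac14\binom{n-1}{k-1}$ and $d\ge1$, then $\mathbf{d}$ is $k$-graphical. (ii) If $k\,\Delta(\mathbf{d})^{1+1/(k-1)}\le\frac12 dn$, then $\mathbf{d}$ is $k$-graphical.
   Context: A sequence $\mathbf{d}\in\mathbb{Z}^n$ is $k$-graphical if there exists a $k$-uniform hypergraph (a set of $k$-element subsets, no repeated edges) on vertex set $[n]$ whose degree sequence is $\mathbf{d}$, i.e. vertex $v$ lies in exactly $d_v$ edges. *)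

theory Defs
  imports Complex_Main
begin

text \<open>A sequence d (indexed by the vertex set [n] = {1..n}) is k-graphical if there is a
  k-uniform hypergraph H (a set of k-element subsets of [n], hence no repeated edges)
  such that every vertex v lies in exactly d v edges.\<close>
definition k_graphical :: "nat \<Rightarrow> nat \<Rightarrow> (nat \<Rightarrow> nat) \<Rightarrow> bool" where
  "k_graphical k n d \<longleftrightarrow>
     (\<exists>H. H \<subseteq> {e. e \<subseteq> {1..n} \<and> card e = k} \<and>
          (\<forall>v\<in>{1..n}. card {e\<in>H. v \<in> e} = d v))"

definition max_deg :: "nat \<Rightarrow> (nat \<Rightarrow> nat) \<Rightarrow> nat" where
  "max_deg n d = Max (d ` {1..n})"

definition avg_deg :: "nat \<Rightarrow> (nat \<Rightarrow> nat) \<Rightarrow> real" where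
  "avg_deg n d = real (\<Sum>v\<in>{1..n}. d v) / real n"

end

theory Submission
  imports Defs
begin

definition deg :: "nat set set \<Rightarrow> nat \<Rightarrow> nat" where
  "deg H v = card {e\<in>H. v \<in> e}"

definition ksets :: "nat \<Rightarrow> nat set \<Rightarrow> nat set set" where
  "ksets k V = {e. e \<subseteq> V \<and> card e = k}"

lemma finite_ksets: "finite V \<Longrightarrow> finite (ksets k V)"
  unfolding ksets_def by (rule finite_subset[of _ "Pow V"]) auto

lemma card_ksets: "finite V \<Longrightarrow> card (ksets k V) = card V choose k"
  unfolding ksets_def by (rule n_subsets)

lemma handshake:
  assumes "finite V" "H \<subseteq> ksets k V"
  shows "(\<Sum>v\<in>V. deg H v) = k * card H"
proof -
  have fH: "finite H" using assms finite_ksets finite_subset by blast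
  have "(\<Sum>v\<in>V. deg H v) = (\<Sum>v\<in>V. \<Sum>e\<in>H. if v \<in> e then 1 else 0)"
    unfolding deg_def using fH by (simp add: sum.If_cases Int_def conj_commute)
  also have "\<dots> = (\<Sum>e\<in>H. \<Sum>v\<in>V. if v \<in> e then 1 else 0)"
    by (rule sum.swap)
  also have "\<dots> = (\<Sum>e\<in>H. k)"
  proof (rule sum.cong)
    fix e assume "e \<in> H"
    then have "e \<subseteq> V" "card e = k" using assms unfolding ksets_def by auto
    then have "V \<inter> e = e" by auto
    then show "(\<Sum>v\<in>V. if v \<in> e then 1 else 0) = k"
      using assms(1) \<open>card e = k\<close> by (simp add: sum.If_cases)
  qed simp
  finally show ?thesis by simp
qed

lemma move_exists:
  assumes "finite H" "deg H y < deg H x"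
  shows "\<exists>g\<in>H. x \<in> g \<and> y \<notin> g \<and> insert y (g - {x}) \<notin> H"
proof (rule ccontr)
  assume contra: "\<not> ?thesis"
  have xy: "x \<noteq> y" using assms by auto
  define A where "A = {g\<in>H. x \<in> g \<and> y \<notin> g}"
  define B where "B = {g\<in>H. y \<in> g \<and> x \<notin> g}"
  define C where "C = {g\<in>H. x \<in> g \<and> y \<in> g}"
  have dx: "deg H x = card A + card C"
  proof -
    have "{e\<in>H. x \<in> e} = A \<union> C" "A \<inter> C = {}" unfolding A_def C_def by auto
    moreover have "finite A" "finite C" unfolding A_def C_def using assms by auto
    ultimately show ?thesis unfolding deg_def by (simp add: card_Un_disjoint)
  qed
  have dy: "deg H y = card B + card C"
  proof -
    have "{e\<in>H. y \<in> e} = B \<union> C" "B \<inter> C = {}" unfolding B_def C_def by auto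
    moreover have "finite B" "finite C" unfolding B_def C_def using assms by auto
    ultimately show ?thesis unfolding deg_def by (simp add: card_Un_disjoint)
  qed
  let ?f = "\<lambda>g. insert y (g - {x})"
  have inj: "inj_on ?f A"
  proof (rule inj_onI)
    fix g1 g2 assume "g1 \<in> A" "g2 \<in> A" "?f g1 = ?f g2"
    then have "insert x (?f g1 - {y}) = insert x (?f g2 - {y})" by simp
    moreover have "insert x (?f g - {y}) = g" if "g \<in> A" for g
      using that xy unfolding A_def by auto
    ultimately show "g1 = g2" using \<open>g1 \<in> A\<close> \<open>g2 \<in> A\<close> by simp
  qed
  have sub: "?f ` A \<subseteq> B"
    using contra xy unfolding A_def B_def by auto
  have "finite B" unfolding B_def using assms by auto
  then have "card A \<le> card B"
    using card_inj_on_le[OF inj sub] by simp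
  then show False using assms dx dy by simp
qed

lemma move_deg:
  assumes "finite H" "g \<in> H" "e \<notin> H"
  shows "deg (insert e (H - {g})) v + (if v \<in> g then 1 else 0)
       = deg H v + (if v \<in> e then 1 else 0)"
proof -
  have eg: "e \<noteq> g" using assms by auto
  let ?S = "{f\<in>H. v \<in> f}"
  have fS: "finite ?S" using assms by auto
  have c1: "card (?S - {g}) + (if v \<in> g then 1 else 0) = card ?S"
  proof (cases "v \<in> g")
    case True
    then have "g \<in> ?S" using assms by auto
    then have "card ?S > 0" using fS card_gt_0_iff by blast
    then show ?thesis using True fS \<open>g \<in> ?S\<close> by (simp add: card_Diff_singleton)
  qed simp
  have "{f\<in>insert e (H - {g}). v \<in> f} = (if v \<in> e then insert e (?S - {g}) else ?S - {g})"
    using eg by auto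
  moreover have "e \<notin> ?S - {g}" using assms by auto
  ultimately have "deg (insert e (H - {g})) v = card (?S - {g}) + (if v \<in> e then 1 else 0)"
    unfolding deg_def using fS by auto
  then show ?thesis using c1 unfolding deg_def by simp
qed

lemma do_move:
  assumes V: "finite V" and H: "H \<subseteq> ksets k V" and xV: "x \<in> V" and yV: "y \<in> V"
    and lt: "deg H y < deg H x"
  shows "\<exists>H'. H' \<subseteq> ksets k V \<and> card H' = card H \<and> deg H' x + 1 = deg H x
     \<and> deg H' y = deg H y + 1 \<and> (\<forall>v. v \<noteq> x \<longrightarrow> v \<noteq> y \<longrightarrow> deg H' v = deg H v)"
proof -
  have fH: "finite H" using V H finite_ksets finite_subset by blast
  obtain g where g: "g \<in> H" "x \<in> g" "y \<notin> g" "insert y (g - {x}) \<notin> H"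
    using move_exists[OF fH lt] by blast
  define e where "e = insert y (g - {x})"
  have xy: "x \<noteq> y" using g by auto
  have gV: "g \<subseteq> V" "card g = k" using g H unfolding ksets_def by auto
  have fg: "finite g" using gV V finite_subset by blast
  have "card g > 0" using fg g(2) card_gt_0_iff by blast
  then have "card e = k" unfolding e_def using fg g gV by (simp add: card_insert_if)
  moreover have "e \<subseteq> V" unfolding e_def using gV yV by auto
  ultimately have eK: "e \<in> ksets k V" unfolding ksets_def by auto
  define H' where "H' = insert e (H - {g})"
  have "H' \<subseteq> ksets k V" unfolding H'_def using eK H by auto
  moreover have "card H' = card H"
  proof -
    have "card H > 0" using g(1) fH card_gt_0_iff by blast
    then show ?thesis
      unfolding H'_def using g fH e_def by (simp add: card_insert_if card_Diff_singleton)
  qed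
  moreover have md: "\<And>v. deg H' v + (if v \<in> g then 1 else 0) = deg H v + (if v \<in> e then 1 else 0)"
    unfolding H'_def using move_deg[OF fH g(1)] g(4) e_def by simp
  moreover have "deg H' x + 1 = deg H x" using md[of x] g xy unfolding e_def by simp
  moreover have "deg H' y = deg H y + 1" using md[of y] g xy unfolding e_def by simp
  moreover have "\<forall>v. v \<noteq> x \<longrightarrow> v \<noteq> y \<longrightarrow> deg H' v = deg H v"
  proof (intro allI impI)
    fix v assume "v \<noteq> x" "v \<noteq> y"
    then have "(v \<in> g) = (v \<in> e)" unfolding e_def by auto
    then show "deg H' v = deg H v" using md[of v] by (auto split: if_splits)
  qed
  ultimately show ?thesis by blast
qed

lemma almost_regular:
  assumes Q: "finite Q" and m: "m \<le> card Q choose k"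
  shows "\<exists>H. H \<subseteq> ksets k Q \<and> card H = m \<and> (\<forall>v\<in>Q. \<forall>w\<in>Q. deg H w \<le> deg H v + 1)"
proof -
  let ?P = "\<lambda>H. H \<subseteq> ksets k Q \<and> card H = m"
  let ?mu = "\<lambda>H. \<Sum>v\<in>Q. (deg H v)^2"
  obtain H0 where "H0 \<subseteq> ksets k Q" "card H0 = m"
    using obtain_subset_with_card_n[of m "ksets k Q"] m card_ksets[OF Q] by metis
  then obtain H where PH: "?P H" and minH: "\<And>H'. ?P H' \<Longrightarrow> ?mu H \<le> ?mu H'"
    using ex_has_least_nat[of ?P H0 ?mu] by blast
  have "\<forall>v\<in>Q. \<forall>w\<in>Q. deg H w \<le> deg H v + 1"
  proof (rule ccontr)
    assume "\<not> ?thesis"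
    then obtain v w where vw0: "v \<in> Q" "w \<in> Q" "\<not> deg H w \<le> deg H v + 1" by blast
    then have vw: "v \<in> Q" "w \<in> Q" "deg H v + 1 < deg H w" by auto
    then have wv: "w \<noteq> v" by auto
    obtain H' where H': "H' \<subseteq> ksets k Q" "card H' = card H" "deg H' w + 1 = deg H w"
      "deg H' v = deg H v + 1" "\<forall>u. u \<noteq> w \<longrightarrow> u \<noteq> v \<longrightarrow> deg H' u = deg H u"
      using do_move[of Q H k w v] Q PH vw by auto
    have split: "\<And>F::nat\<Rightarrow>nat. (\<Sum>u\<in>Q. F u) = F w + F v + (\<Sum>u\<in>Q - {w} - {v}. F u)"
    proof -
      fix F :: "nat \<Rightarrow> nat"
      have e1: "(\<Sum>u\<in>Q. F u) = F w + (\<Sum>u\<in>Q - {w}. F u)" by (rule sum.remove[OF Q vw(2)])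
      have e2: "(\<Sum>u\<in>Q - {w}. F u) = F v + (\<Sum>u\<in>Q - {w} - {v}. F u)"
        by (rule sum.remove) (use Q vw wv in auto)
      show "(\<Sum>u\<in>Q. F u) = F w + F v + (\<Sum>u\<in>Q - {w} - {v}. F u)" using e1 e2 by simp
    qed
    have rest: "(\<Sum>u\<in>Q - {w} - {v}. (deg H' u)^2) = (\<Sum>u\<in>Q - {w} - {v}. (deg H u)^2)"
      using H'(5) by (intro sum.cong) auto
    have "(deg H' w)^2 + (deg H' v)^2 < (deg H w)^2 + (deg H v)^2"
    proof -
      obtain a where a: "deg H' w = a" by blast
      obtain b where b: "deg H v = b" by blast
      have "b < a" using vw H'(3) a b by simp
      then have "a^2 + (b+1)^2 < (a+1)^2 + b^2" by (simp add: power2_eq_square)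
      then show ?thesis using a b H'(3) H'(4) by (metis add.commute)
    qed
    then have "?mu H' < ?mu H" using split[of "\<lambda>u. (deg H' u)^2"] split[of "\<lambda>u. (deg H u)^2"] rest
      by linarith
    moreover have "?P H'" using H' PH by simp
    ultimately show False using minH[of H'] by simp
  qed
  then show ?thesis using PH by blast
qed

lemma phase2:
  assumes V: "finite V" and QV: "Q \<subseteq> V"
    and top: "\<forall>x\<in>Q. \<forall>y\<in>V - Q. d y \<le> d x"
    and H0: "H0 \<subseteq> ksets k V" and sumd: "(\<Sum>v\<in>V. d v) = k * card H0"
    and inQ: "\<forall>v\<in>Q. d v \<le> deg H0 v" and outQ: "\<forall>v\<in>V - Q. deg H0 v \<le> d v"
  shows "\<exists>H. H \<subseteq> ksets k V \<and> (\<forall>v\<in>V. deg H v = d v)"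
proof -
  let ?P = "\<lambda>H. H \<subseteq> ksets k V \<and> card H = card H0 \<and> (\<forall>v\<in>Q. d v \<le> deg H v) \<and> (\<forall>v\<in>V - Q. deg H v \<le> d v)"
  let ?mu = "\<lambda>H. \<Sum>v\<in>Q. (deg H v - d v)"
  have fQ: "finite Q" using V QV finite_subset by blast
  obtain H where PH: "?P H" and minH: "\<And>H'. ?P H' \<Longrightarrow> ?mu H \<le> ?mu H'"
    using ex_has_least_nat[of ?P H0 ?mu] H0 inQ outQ by blast
  have sumsplit: "\<And>F::nat\<Rightarrow>nat. (\<Sum>v\<in>V. F v) = (\<Sum>v\<in>Q. F v) + (\<Sum>v\<in>V - Q. F v)"
    using V QV by (metis add.commute sum.subset_diff)
  have hs: "(\<Sum>v\<in>V. deg H v) = (\<Sum>v\<in>V. d v)"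
    using handshake[OF V, of H k] PH sumd by simp
  have eqQ: "\<forall>v\<in>Q. deg H v = d v"
  proof (rule ccontr)
    assume "\<not> ?thesis"
    then obtain x where x: "x \<in> Q" "d x < deg H x" using PH by force
    have "(\<Sum>v\<in>Q. d v) < (\<Sum>v\<in>Q. deg H v)"
      using x PH fQ by (intro sum_strict_mono_ex1) auto
    then have "(\<Sum>v\<in>V - Q. deg H v) < (\<Sum>v\<in>V - Q. d v)"
      using hs sumsplit[of "deg H"] sumsplit[of d] by linarith
    then obtain y where y: "y \<in> V - Q" "deg H y < d y"
    proof -
      assume r: "\<And>y. y \<in> V - Q \<Longrightarrow> deg H y < d y \<Longrightarrow> thesis"
      show thesis
      proof (rule ccontr)
        assume "\<not> thesis"
        then have "\<forall>y\<in>V - Q. d y \<le> deg H y" using r not_less by blast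
        then have "(\<Sum>v\<in>V - Q. d v) \<le> (\<Sum>v\<in>V - Q. deg H v)" by (intro sum_mono) auto
        then show False using \<open>(\<Sum>v\<in>V - Q. deg H v) < (\<Sum>v\<in>V - Q. d v)\<close> by simp
      qed
    qed
    have "d y \<le> d x" using top x y by blast
    then have "deg H y < deg H x" using x y by linarith
    then obtain H' where H': "H' \<subseteq> ksets k V" "card H' = card H" "deg H' x + 1 = deg H x"
      "deg H' y = deg H y + 1" "\<forall>u. u \<noteq> x \<longrightarrow> u \<noteq> y \<longrightarrow> deg H' u = deg H u"
      using do_move[of V H k x y] V PH x y QV by auto
    have xy: "x \<noteq> y" using x y by auto
    have PH': "?P H'"
    proof -
      have "\<forall>v\<in>Q. d v \<le> deg H' v"
      proof
        fix v assume "v \<in> Q"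
        show "d v \<le> deg H' v"
        proof (cases "v = x")
          case True then show ?thesis using x H'(3) by simp
        next
          case False then have "v \<noteq> y" using \<open>v \<in> Q\<close> y by auto
          then show ?thesis using False H'(5) PH \<open>v \<in> Q\<close> by auto
        qed
      qed
      moreover have "\<forall>v\<in>V - Q. deg H' v \<le> d v"
      proof
        fix v assume "v \<in> V - Q"
        show "deg H' v \<le> d v"
        proof (cases "v = y")
          case True then show ?thesis using y H'(4) by simp
        next
          case False then have "v \<noteq> x" using \<open>v \<in> V - Q\<close> x by auto
          then show ?thesis using False H'(5) PH \<open>v \<in> V - Q\<close> by auto
        qed
      qed
      ultimately show ?thesis using H' PH by simp
    qed
    have "?mu H' < ?mu H"
    proof -
      have r: "(\<Sum>v\<in>Q - {x}. deg H' v - d v) = (\<Sum>v\<in>Q - {x}. deg H v - d v)"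
        using H'(5) y by (intro sum.cong) auto
      have "?mu H = (deg H x - d x) + (\<Sum>v\<in>Q - {x}. deg H v - d v)"
        by (rule sum.remove[OF fQ x(1)])
      moreover have "?mu H' = (deg H' x - d x) + (\<Sum>v\<in>Q - {x}. deg H' v - d v)"
        by (rule sum.remove[OF fQ x(1)])
      ultimately show ?thesis using r H'(3) x by simp
    qed
    then show False using minH[OF PH'] by simp
  qed
  have "\<forall>v\<in>V. deg H v = d v"
  proof (rule ccontr)
    assume "\<not> ?thesis"
    then obtain y where y: "y \<in> V" "deg H y \<noteq> d y" by blast
    then have yQ: "y \<in> V - Q" using eqQ by auto
    then have "deg H y < d y" using y PH by force
    then have "(\<Sum>v\<in>V - Q. deg H v) < (\<Sum>v\<in>V - Q. d v)"
      using yQ PH V by (intro sum_strict_mono_ex1) auto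
    moreover have "(\<Sum>v\<in>Q. deg H v) = (\<Sum>v\<in>Q. d v)" using eqQ by simp
    ultimately show False using hs sumsplit[of "deg H"] sumsplit[of d] by linarith
  qed
  then show ?thesis using PH by blast
qed

lemma top_set:
  assumes V: "finite V" and q: "q \<le> card V"
  shows "\<exists>Q\<subseteq>V. card Q = q \<and> (\<forall>x\<in>Q. \<forall>y\<in>V - Q. (d::nat\<Rightarrow>nat) y \<le> d x)"
  using q
proof (induction q)
  case 0 then show ?case by auto
next
  case (Suc q)
  then obtain Q where Q: "Q \<subseteq> V" "card Q = q" "\<forall>x\<in>Q. \<forall>y\<in>V - Q. d y \<le> d x" by auto
  have fQ: "finite Q" using Q V finite_subset by blast
  have "V - Q \<noteq> {}"
  proof
    assume "V - Q = {}"
    then have "V \<subseteq> Q" by blast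
    then have "card V \<le> card Q" using fQ card_mono by blast
    then show False using Q Suc.prems by simp
  qed
  moreover have "finite (V - Q)" using V by simp
  ultimately have "Max (d ` (V - Q)) \<in> d ` (V - Q)" by (intro Max_in) auto
  then obtain z where z0: "z \<in> V - Q" "d z = Max (d ` (V - Q))" by auto
  have z: "z \<in> V - Q" "\<forall>y\<in>V - Q. d y \<le> d z"
    using z0 \<open>finite (V - Q)\<close> by auto
  show ?case
  proof (intro exI[of _ "insert z Q"] conjI)
    show "insert z Q \<subseteq> V" using z Q by auto
    show "card (insert z Q) = Suc q" using z fQ Q by simp
    show "\<forall>x\<in>insert z Q. \<forall>y\<in>V - insert z Q. d y \<le> d x" using z Q by auto
  qed
qed

lemma main_suff:
  assumes k: "k \<ge> 1" and n: "n \<ge> 1" and dvd: "k dvd (\<Sum>v\<in>{1..n}. d v)" and qn: "q \<le> n"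
    and qD: "q * max_deg n d \<le> (\<Sum>v\<in>{1..n}. d v)"
    and Sq: "(\<Sum>v\<in>{1..n}. d v) \<le> k * (q choose k)"
  shows "k_graphical k n d"
proof -
  define V where "V = {1..n}"
  define S where "S = (\<Sum>v\<in>{1..n}. d v)"
  define D where "D = max_deg n d"
  have fV: "finite V" and cV: "card V = n" unfolding V_def by auto
  obtain Q where Q: "Q \<subseteq> V" "card Q = q" "\<forall>x\<in>Q. \<forall>y\<in>V - Q. d y \<le> d x"
    using top_set[OF fV, of q d] qn cV by auto
  have fQ: "finite Q" using Q fV finite_subset by blast
  obtain m where m: "S = k * m" using dvd unfolding S_def by blast
  have mq: "m \<le> q choose k" using Sq m k unfolding S_def by simp
  obtain H0 where H0: "H0 \<subseteq> ksets k Q" "card H0 = m" "\<forall>v\<in>Q. \<forall>w\<in>Q. deg H0 w \<le> deg H0 v + 1"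
    using almost_regular[OF fQ, of m k] mq Q by auto
  have H0V: "H0 \<subseteq> ksets k V" using H0(1) Q(1) unfolding ksets_def by blast
  have dD: "\<forall>v\<in>V. d v \<le> D"
    unfolding D_def max_deg_def V_def by (auto intro: Max_ge)
  have hsQ: "(\<Sum>v\<in>Q. deg H0 v) = S" using handshake[OF fQ H0(1)] H0 m by simp
  have inQ: "\<forall>v\<in>Q. d v \<le> deg H0 v"
  proof
    fix v assume vQ: "v \<in> Q"
    have "D \<le> deg H0 v"
    proof (rule ccontr)
      assume "\<not> D \<le> deg H0 v"
      then have lt: "deg H0 v < D" by simp
      have "\<forall>w\<in>Q. deg H0 w \<le> D" using H0(3) vQ lt by fastforce
      then have "(\<Sum>w\<in>Q. deg H0 w) < (\<Sum>w\<in>Q. D)"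
        using vQ lt fQ by (intro sum_strict_mono_ex1) auto
      then have "S < q * D" using hsQ Q(2) by simp
      then show False using qD unfolding S_def D_def by simp
    qed
    then show "d v \<le> deg H0 v" using dD vQ Q(1) by force
  qed
  have outQ: "\<forall>v\<in>V - Q. deg H0 v \<le> d v"
  proof
    fix v assume "v \<in> V - Q"
    then have "{e\<in>H0. v \<in> e} = {}" using H0(1) unfolding ksets_def by auto
    then show "deg H0 v \<le> d v" unfolding deg_def by (simp only: card.empty)
  qed
  have sumd: "(\<Sum>v\<in>V. d v) = k * card H0" using m H0(2) unfolding S_def V_def by simp
  obtain H where H: "H \<subseteq> ksets k V" "\<forall>v\<in>V. deg H v = d v"
    using phase2[OF fV Q(1) Q(3) H0V sumd inQ outQ] by blast
  then show ?thesis unfolding k_graphical_def V_def deg_def ksets_def by blast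
qed


lemma binom_step:
  assumes "N \<ge> 1"
  shows "real (N choose r) * (1 - real r / real N) \<le> real ((N - 1) choose r)"
proof (cases "r \<le> N")
  case True
  have "(N - r) * (N choose r) = N * ((N - 1) choose r)" by (rule binomial_absorb_comp)
  then have "real (N - r) * real (N choose r) = real N * real ((N - 1) choose r)"
    by (metis of_nat_mult)
  then have "(real N - real r) * real (N choose r) = real N * real ((N - 1) choose r)"
    using True by (simp add: of_nat_diff)
  then show ?thesis using assms by (simp add: field_simps)
next
  case False
  then have z: "N choose r = 0" by simp
  show ?thesis unfolding z by simp
qed

lemma binom_ratio:
  assumes q: "q \<ge> 1"
  shows "real ((q + j - 1) choose r) * (1 - real j * real r / real q) \<le> real ((q - 1) choose r)"
proof (induction j)
  case 0 then show ?case by simp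
next
  case (Suc j)
  let ?a = "real j * real r / real q"
  let ?b = "real r / real q"
  have st: "real ((q + j) choose r) * (1 - real r / real (q + j)) \<le> real ((q + j - 1) choose r)"
    using binom_step[of "q + j" r] q by simp
  have "real r / real (q + j) \<le> ?b" using q by (intro divide_left_mono) auto
  then have st2: "real ((q + j) choose r) * (1 - ?b) \<le> real ((q + j - 1) choose r)"
    using st by (smt (verit) mult_left_mono of_nat_0_le_iff)
  show ?case
  proof (cases "1 - ?a \<ge> 0")
    case True
    have "real ((q + j) choose r) * (1 - ?b) * (1 - ?a) \<le> real ((q + j - 1) choose r) * (1 - ?a)"
      using st2 True by (rule mult_right_mono)
    also have "\<dots> \<le> real ((q - 1) choose r)" using Suc.IH by simp
    finally have A: "real ((q + j) choose r) * ((1 - ?b) * (1 - ?a)) \<le> real ((q - 1) choose r)"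
      by (simp add: mult.assoc)
    have "1 - real (Suc j) * real r / real q \<le> (1 - ?b) * (1 - ?a)"
    proof -
      have "?a * ?b \<ge> 0" by simp
      moreover have "real (Suc j) * real r / real q = ?a + ?b" by (simp add: add_divide_distrib distrib_right)
      moreover have ab: "\<And>a b::real. (1 - b) * (1 - a) = 1 - (a + b) + a * b" by (simp add: algebra_simps)
      ultimately show ?thesis using ab[of ?b ?a] by linarith
    qed
    then have "real ((q + j) choose r) * (1 - real (Suc j) * real r / real q)
        \<le> real ((q + j) choose r) * ((1 - ?b) * (1 - ?a))" by (intro mult_left_mono) auto
    then show ?thesis using A by simp
  next
    case False
    have "real j * real r \<le> real (Suc j) * real r" by (intro mult_right_mono) auto
    then have "real (Suc j) * real r / real q \<ge> ?a" using q by (intro divide_right_mono) auto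
    then have "1 - real (Suc j) * real r / real q \<le> 0" using False by simp
    then have "real ((q + Suc j - 1) choose r) * (1 - real (Suc j) * real r / real q) \<le> 0"
      by (simp add: mult_nonneg_nonpos)
    then show ?thesis by (smt (verit) of_nat_0_le_iff)
  qed
qed

lemma finish_q:
  assumes k: "k \<ge> 1" and D: "D \<ge> 1" and q: "q = S div D" "q \<ge> 1"
    and C: "2 * D \<le> (q - 1) choose (k - 1)"
  shows "S \<le> k * (q choose k)"
proof -
  have kq: "k * (q choose k) = q * ((q - 1) choose (k - 1))"
    using times_binomial_minus1_eq[of k q] k by simp
  have "S = q * D + S mod D" using q by simp
  moreover have "S mod D < D" using D by simp
  ultimately have "S < (q + 1) * D" by simp
  also have "\<dots> \<le> q * (2 * D)" using q(2) by simp
  also have "\<dots> \<le> q * ((q - 1) choose (k - 1))" using C by simp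
  finally show ?thesis using kq by simp
qed

lemma part_i_nat:
  assumes k: "k \<ge> 2" and n: "20 * k < n" and a: "3 * k * n * D \<le> (3 * k + 1) * S"
    and b: "4 * D \<le> (n - 1) choose (k - 1)" and D: "D \<ge> 1" and SD: "S \<le> n * D" "D \<le> S"
  shows "\<exists>q. q \<le> n \<and> q * D \<le> S \<and> S \<le> k * (q choose k)"
proof -
  define q where "q = S div D"
  have qD: "q * D \<le> S" unfolding q_def by (metis div_mult_mod_eq le_add1)
  have "q * D \<le> n * D" using qD SD(1) by (rule le_trans)
  then have qn: "q \<le> n" using D by simp
  have q1: "q \<ge> 1" unfolding q_def using SD D by (metis One_nat_def div_greater_zero_iff le_less_trans less_one not_le)
  have "S = q * D + S mod D" unfolding q_def by simp
  moreover have "S mod D < D" using D by simp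
  ultimately have Slt: "S < (q + 1) * D" by simp
  have "3 * k * n * D < (3 * k + 1) * (q + 1) * D"
    using a Slt by (metis (no_types, lifting) le_less_trans mult.assoc mult_less_cancel1 nat_0_less_mult_iff
        add_gr_0 zero_less_one)
  then have lt: "3 * k * n < (3 * k + 1) * (q + 1)" by (rule mult_right_less_imp_less) simp
  define j where "j = n - q"
  have nqj: "n = q + j" unfolding j_def using qn by simp
  have A: "3 * (k * j) \<le> q + 3 * k"
  proof -
    have "3 * k * (q + j) < (3 * k + 1) * (q + 1)" using lt nqj by simp
    then show ?thesis by (simp add: algebra_simps)
  qed
  have B: "2 * j \<le> k * j" using k by (intro mult_right_mono) auto
  have kj: "j * (k - 1) + j = k * j" using k by (cases k) (auto simp: algebra_simps)
  have jq: "2 * j * (k - 1) \<le> q" using A B kj n nqj by linarith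
  have r1: "real ((q + j - 1) choose (k - 1)) * (1 - real j * real (k - 1) / real q)
      \<le> real ((q - 1) choose (k - 1))" by (rule binom_ratio[OF q1])
  have "2 * (real j * real (k - 1)) \<le> real q"
    using jq by (metis of_nat_le_iff of_nat_mult of_nat_numeral mult.assoc)
  then have "real j * real (k - 1) / real q \<le> 1 / 2" using q1 by (simp add: field_simps)
  then have "real ((n - 1) choose (k - 1)) * (1 / 2)
      \<le> real ((n - 1) choose (k - 1)) * (1 - real j * real (k - 1) / real q)"
    by (intro mult_left_mono) auto
  also have "\<dots> \<le> real ((q - 1) choose (k - 1))" using r1 nqj by simp
  finally have "real ((n - 1) choose (k - 1)) * (1 / 2) \<le> real ((q - 1) choose (k - 1))" .
  moreover have "real (4 * D) \<le> real ((n - 1) choose (k - 1))" using b by (simp only: of_nat_le_iff)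
  ultimately have "real (4 * D) * (1/2) \<le> real ((q - 1) choose (k - 1))" by linarith
  then have "2 * D \<le> (q - 1) choose (k - 1)" by linarith
  then have "S \<le> k * (q choose k)" using finish_q[of k D q S] k D q1 q_def by simp
  then show ?thesis using qn qD by blast
qed

lemma part_ii_q:
  assumes k: "k \<ge> 2" and D: "D \<ge> 1"
    and h: "real k * real D powr (1 + 1 / (real k - 1)) \<le> real S / 2"
    and SD: "S \<le> n * D" "D \<le> S"
  shows "\<exists>q. q \<le> n \<and> q * D \<le> S \<and> S \<le> k * (q choose k)"
proof -
  define x where "x = real D powr (1 / (real k - 1))"
  have Dpos: "real D > 0" using D by simp
  have km1: "real (k - 1) = real k - 1" "real k - 1 > 0" using k by (auto simp: of_nat_diff)
  have x1: "x \<ge> 1" unfolding x_def using D km1 by (intro ge_one_powr_ge_zero) auto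
  have pw: "real D powr (1 + 1 / (real k - 1)) = real D * x"
    unfolding x_def using Dpos by (simp add: powr_add)
  have xk: "x ^ (k - 1) = real D"
  proof -
    have "x ^ (k - 1) = x powr real (k - 1)" using x1 by (simp add: powr_realpow)
    also have "\<dots> = real D powr (1 / (real k - 1) * real (k - 1))" unfolding x_def by (simp add: powr_powr)
    also have "\<dots> = real D" using km1 Dpos by simp
    finally show ?thesis .
  qed
  have S2: "2 * real k * real D * x \<le> real S" using h pw by (simp add: algebra_simps)
  define q where "q = S div D"
  have qD: "q * D \<le> S" unfolding q_def by (metis div_mult_mod_eq le_add1)
  have "q * D \<le> n * D" using qD SD(1) by (rule le_trans)
  then have qn: "q \<le> n" using D by simp
  have q1: "q \<ge> 1" unfolding q_def using SD D by (metis One_nat_def div_greater_zero_iff le_less_trans less_one not_le)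
  have "S = q * D + S mod D" unfolding q_def by simp
  moreover have "S mod D < D" using D by simp
  ultimately have Slt: "S < (q + 1) * D" by simp
  then have "real S < (real q + 1) * real D" by (metis of_nat_less_iff of_nat_mult of_nat_Suc Suc_eq_plus1 add.commute)
  then have "(2 * real k * x) * real D < (real q + 1) * real D" using S2 by (simp add: algebra_simps)
  then have kx: "2 * real k * x < real q + 1" using Dpos by simp
  have rq: "real (q - 1) = real q - 1" using q1 by (simp add: of_nat_diff)
  have "2 * x * (real k - 1) \<le> real (q - 1)" using kx x1 rq by (simp add: algebra_simps)
  then have r: "2 * x \<le> real (q - 1) / real (k - 1)" using km1 by (simp add: field_simps)
  have "real (k - 1) \<le> real (q - 1)"
  proof -
    have "2 * 1 * (real k - 1) \<le> 2 * x * (real k - 1)" using x1 km1 by (intro mult_right_mono) auto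
    then have "2 * (real k - 1) \<le> real (q - 1)" using \<open>2 * x * (real k - 1) \<le> real (q - 1)\<close> by simp
    then show ?thesis unfolding km1(1) using km1(2) by simp
  qed
  then have kq: "k - 1 \<le> q - 1" by simp
  have "(2 * x) ^ (k - 1) \<le> (real (q - 1) / real (k - 1)) ^ (k - 1)"
    using r x1 by (intro power_mono) auto
  also have "\<dots> \<le> real ((q - 1) choose (k - 1))" using binomial_ge_n_over_k_pow_k[OF kq] by simp
  finally have c1: "(2 * x) ^ (k - 1) \<le> real ((q - 1) choose (k - 1))" .
  have "(2 * x) ^ (k - 1) = 2 ^ (k - 1) * real D" using xk by (simp add: power_mult_distrib)
  moreover have "(2::real) ^ (k - 1) \<ge> 2 ^ 1" using k by (intro power_increasing) auto
  ultimately have "2 * real D \<le> (2 * x) ^ (k - 1)" using Dpos by simp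
  then have "real (2 * D) \<le> real ((q - 1) choose (k - 1))" using c1 by simp
  then have "2 * D \<le> (q - 1) choose (k - 1)" by (simp only: of_nat_le_iff)
  then have "S \<le> k * (q choose k)" using finish_q[of k D q S] k D q1 q_def by simp
  then show ?thesis using qn qD by blast
qed


theorem proposition2p2:
  fixes n k :: nat and d :: "nat \<Rightarrow> nat"
  assumes "k \<ge> 2" and "20 * k < n"
    and "(\<Sum>v\<in>{1..n}. d v) mod k = 0"
  shows "(real (max_deg n d) \<le> (1 + 1 / (3 * real k)) * avg_deg n d
            \<and> (1 + 1 / (3 * real k)) * avg_deg n d \<le> (1/4) * real ((n - 1) choose (k - 1))
            \<and> avg_deg n d \<ge> 1
          \<longrightarrow> k_graphical k n d)
       \<and> (real k * real (max_deg n d) powr (1 + 1 / (real k - 1)) \<le> (1/2) * avg_deg n d * real n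
          \<longrightarrow> k_graphical k n d)"
proof -
  define S where "S = (\<Sum>v\<in>{1..n}. d v)"
  define D where "D = max_deg n d"
  have k: "k \<ge> 2" and k1: "k \<ge> 1" using assms by auto
  have n1: "n \<ge> 1" using assms by simp
  have npos: "real n > 0" using n1 by simp
  have dvd: "k dvd S" unfolding S_def using assms(3) by auto
  have dD: "\<forall>v\<in>{1..n}. d v \<le> D" unfolding D_def max_deg_def by (auto intro: Max_ge)
  have SD1: "S \<le> n * D"
  proof -
    have "S \<le> card {1..n} * D" unfolding S_def using sum_bounded_above[of "{1..n}" d D] dD by simp
    then show ?thesis by simp
  qed
  have SD2: "D \<le> S"
  proof -
    have "D \<in> d ` {1..n}" unfolding D_def max_deg_def using n1 by (intro Max_in) auto
    then obtain v where v: "v \<in> {1..n}" "D = d v" by auto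
    then show ?thesis unfolding S_def using member_le_sum[of v "{1..n}" d] by simp
  qed
  have avg: "avg_deg n d = real S / real n" unfolding avg_deg_def S_def by simp
  show ?thesis
  proof (intro conjI impI)
    assume h: "real (max_deg n d) \<le> (1 + 1 / (3 * real k)) * avg_deg n d
            \<and> (1 + 1 / (3 * real k)) * avg_deg n d \<le> (1/4) * real ((n - 1) choose (k - 1))
            \<and> avg_deg n d \<ge> 1"
    have eq: "(1 + 1 / (3 * real k)) * (real S / real n) = (3 * real k + 1) * real S / (3 * real k * real n)"
      using k npos by (simp add: field_simps)
    have "real D \<le> (3 * real k + 1) * real S / (3 * real k * real n)"
      using h eq avg unfolding D_def by simp
    then have "real D * (3 * real k * real n) \<le> (3 * real k + 1) * real S"
      using k npos by (simp add: pos_le_divide_eq)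
    then have "real (3 * k * n * D) \<le> real ((3 * k + 1) * S)" by (simp add: algebra_simps)
    then have a: "3 * k * n * D \<le> (3 * k + 1) * S" by (simp only: of_nat_le_iff)
    have "real D \<le> (1/4) * real ((n - 1) choose (k - 1))" using h unfolding D_def by linarith
    then have "real (4 * D) \<le> real ((n - 1) choose (k - 1))" by simp
    then have b: "4 * D \<le> (n - 1) choose (k - 1)" by (simp only: of_nat_le_iff)
    have "real S / real n \<ge> 1" using h avg by simp
    then have "real n \<le> real S" using npos by (simp add: field_simps)
    then have "n \<le> S" by simp
    then have D1: "D \<ge> 1" using SD1 n1 by (metis le_trans mult_0_right not_less_eq_eq One_nat_def le_0_eq)
    obtain q where q: "q \<le> n" "q * D \<le> S" "S \<le> k * (q choose k)"
      using part_i_nat[OF k assms(2) a b D1 SD1 SD2] by blast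
    show "k_graphical k n d"
      using main_suff[OF k1 n1, of d q] dvd q unfolding S_def D_def by simp
  next
    assume h: "real k * real (max_deg n d) powr (1 + 1 / (real k - 1)) \<le> (1/2) * avg_deg n d * real n"
    show "k_graphical k n d"
    proof (cases "D = 0")
      case True
      then have "S = 0" using SD1 by simp
      then show ?thesis using main_suff[OF k1 n1, of d 0] dvd k1 unfolding S_def D_def by simp
    next
      case False
      then have D1: "D \<ge> 1" by simp
      have "real k * real D powr (1 + 1 / (real k - 1)) \<le> real S / 2"
        using h avg npos unfolding D_def by simp
      then obtain q where q: "q \<le> n" "q * D \<le> S" "S \<le> k * (q choose k)"
        using part_ii_q[OF k D1 _ SD1 SD2] by blast
      show ?thesis
        using main_suff[OF k1 n1, of d q] dvd q unfolding S_def D_def by simp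
    qed
  qed
qed

end
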